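(* Let $r$ be odd with $1\le r\le n$. If $\mathbf{x}_1,\ldots,\mathbf{x}_r\in\mathbb{F}_2^n$ and both $A$ and $A+\sum_{i=1}^r\mathbf{x}_i\mathbf{x}_i^{\top}$ lie in $\mathrm{SGL}_n(\mathbb{F}_2)$, then $\mathbf{x}_i^{\top}A^{-1}\mathbf{x}_i=0$ for some $i$.
   Context: $\mathrm{SGL}_n(\mathbb{F}_2)$ is the set of invertible symmetric $n\times n$ matrices over the binary field $\mathbb{F}_2$. *)

theory Defs
  imports "HOL-Analysis.Analysis" "HOL-Library.Z2"
begin

text \<open>Matrices over the binary field F_2 (type bit); dimension n = CARD('n).\<close>

definition SGL :: "(bit ^ 'n ^ 'n) set" where
  "SGL = {A. transpose A = A \<and> invertible A}"

definition outer :: "bit ^ 'n \<Rightarrow> bit ^ 'n ^ 'n" where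
  "outer x = (\<chi> i j. x $ i * x $ j)"

end

theory Submission
  imports Defs "Jordan_Normal_Form.Determinant"
begin

lemma bit_add_self: "(a::bit) + a = 0"
  by (cases a) simp_all

lemma bit_of_nat_eq0: "(of_nat n :: bit) = 0 \<longleftrightarrow> even n"
proof (induction n)
  case (Suc n)
  then show ?case by (cases "(of_nat n :: bit) = 0") (auto simp: bit_add_self)
qed simp

lemma involution_sum:
  fixes f :: "'a \<Rightarrow> bit"
  assumes "finite S" "\<forall>p\<in>S. g p \<in> S \<and> g (g p) = p" "\<forall>p\<in>S. f (g p) = f p"
  shows "sum f S = sum f {p\<in>S. g p = p}"
  using assms
proof (induction S rule: finite_psubset_induct)
  case (psubset S)
  show ?case
  proof (cases "S = {}")
    case True then show ?thesis by simp
  next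
    case False
    then obtain p where p: "p \<in> S" by blast
    show ?thesis
    proof (cases "g p = p")
      case True
      let ?S = "S - {p}"
      have cl: "\<forall>q\<in>?S. g q \<in> ?S \<and> g (g q) = q"
        using psubset.prems(1) True by (metis Diff_iff singletonD singletonI)
      have ih: "sum f ?S = sum f {q\<in>?S. g q = q}"
        using psubset.IH[of ?S] cl psubset.prems(2) p by auto
      have "sum f S = f p + sum f ?S"
        using p psubset.hyps by (simp add: sum.remove)
      moreover have "{q\<in>S. g q = q} = insert p {q\<in>?S. g q = q}" using True p by auto
      moreover have "sum f (insert p {q\<in>?S. g q = q}) = f p + sum f {q\<in>?S. g q = q}"
        using psubset.hyps by (subst sum.insert) auto
      ultimately show ?thesis using ih by simp
    next
      case False
      let ?S = "S - {p, g p}"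
      have gp: "g p \<in> S" using p psubset.prems(1) by blast
      have cl: "\<forall>q\<in>?S. g q \<in> ?S \<and> g (g q) = q"
        using psubset.prems(1) p by (metis Diff_iff insertCI insertE singletonD)
      have ih: "sum f ?S = sum f {q\<in>?S. g q = q}"
        using psubset.IH[of ?S] cl psubset.prems(2) p by auto
      have "sum f S = sum f {p, g p} + sum f ?S"
        using p gp psubset.hyps by (metis Diff_partition empty_subsetI insert_subset sum.subset_diff add.commute)
      moreover have "sum f {p, g p} = 0"
        using False psubset.prems(2) p by (simp add: bit_add_self)
      moreover have "{q\<in>S. g q = q} = {q\<in>?S. g q = q}" using False p psubset.prems(1) by auto
      ultimately show ?thesis using ih by simp
    qed
  qed
qed

lemma involution_fixpoint:
  fixes r :: nat and p :: "nat \<Rightarrow> nat"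
  assumes "odd r" "\<forall>i<r. p i < r \<and> p (p i) = i"
  shows "\<exists>i<r. p i = i"
proof -
  have "sum (\<lambda>_. 1::bit) {0..<r} = sum (\<lambda>_. 1::bit) {i\<in>{0..<r}. p i = i}"
    using involution_sum[of "{0..<r}" p "\<lambda>_. 1::bit"] assms(2) by auto
  then have "(of_nat r :: bit) = of_nat (card {i\<in>{0..<r}. p i = i})"
    by (simp only: sum_constant mult.right_neutral card_atLeastLessThan diff_zero)
  then have "odd (card {i\<in>{0..<r}. p i = i})" using assms(1) bit_of_nat_eq0
    by (metis)
  then have "{i\<in>{0..<r}. p i = i} \<noteq> {}" by (metis card.empty even_zero)
  then show ?thesis by auto
qed

lemma alt_det:
  fixes M :: "nat \<Rightarrow> nat \<Rightarrow> bit" and r :: nat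
  assumes "odd r" "\<forall>i<r. \<forall>j<r. M i j = M j i" "\<forall>i<r. M i i = 0"
  shows "Determinant.det (mat r r (\<lambda>(i,j). M i j)) = 0"
proof -
  let ?N = "mat r r (\<lambda>(i,j). M i j)"
  let ?P = "{p. p permutes {0..<r}}"
  let ?f = "\<lambda>p. \<Prod>i = 0..<r. ?N $$ (i, p i)"
  have d: "Determinant.det ?N = (\<Sum>p\<in>?P. signof p * ?f p)"
    by (rule det_def') simp
  have sg: "(signof p :: bit) = 1" for p by (simp add: sign_def)
  have d2: "Determinant.det ?N = sum ?f ?P" unfolding d sg by (simp only: mult_1_left)
  have fin: "finite ?P" by (simp add: finite_permutations)
  have cl: "\<forall>p\<in>?P. inv_into UNIV p \<in> ?P \<and> inv_into UNIV (inv_into UNIV p) = p"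
    by (auto simp: permutes_inv permutes_inv_inv)
  have sym: "\<forall>p\<in>?P. ?f (inv_into UNIV p) = ?f p"
  proof
    fix p assume p: "p \<in> ?P"
    then have pp: "p permutes {0..<r}" by simp
    have bij: "bij_betw p {0..<r} {0..<r}" using pp by (rule permutes_imp_bij)
    have "?f (inv_into UNIV p) = (\<Prod>i = 0..<r. ?N $$ (p i, inv_into UNIV p (p i)))"
      using prod.reindex_bij_betw[OF bij, of "\<lambda>i. ?N $$ (i, inv_into UNIV p i)"] by simp
    also have "\<dots> = (\<Prod>i = 0..<r. ?N $$ (i, p i))"
    proof (rule prod.cong[OF refl])
      fix i assume i: "i \<in> {0..<r}"
      then have pi: "p i < r" using permutes_in_image[OF pp] by auto
      have "inv_into UNIV p (p i) = i" using permutes_inverses(2)[OF pp] by simp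
      then show "?N $$ (p i, inv_into UNIV p (p i)) = ?N $$ (i, p i)"
        using i pi assms(2) by simp
    qed
    finally show "?f (inv_into UNIV p) = ?f p" .
  qed
  have "sum ?f ?P = sum ?f {p\<in>?P. inv_into UNIV p = p}"
    by (rule involution_sum[OF fin cl sym])
  also have "\<dots> = 0"
  proof (rule sum.neutral, rule ballI)
    fix p assume "p \<in> {p\<in>?P. inv_into UNIV p = p}"
    then have pp: "p permutes {0..<r}" and ip: "inv_into UNIV p = p" by auto
    have "\<forall>i<r. p i < r \<and> p (p i) = i"
      using permutes_in_image[OF pp] permutes_inverses(2)[OF pp] ip by (metis atLeastLessThan_iff zero_le)
    then obtain i where i: "i < r" "p i = i" using involution_fixpoint[OF assms(1)] by blast
    have "?N $$ (i, p i) = 0" using i assms(3) by simp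
    then show "?f p = 0" using i by (intro prod_zero) (auto intro!: bexI[of _ i])
  qed
  finally show ?thesis using d2 by simp
qed

lemma alt_kernel:
  fixes M :: "nat \<Rightarrow> nat \<Rightarrow> bit" and r :: nat
  assumes "odd r" "\<forall>i<r. \<forall>j<r. M i j = M j i" "\<forall>i<r. M i i = 0"
  shows "\<exists>c. (\<exists>j<r. c j \<noteq> 0) \<and> (\<forall>i<r. (\<Sum>j<r. M i j * c j) = 0)"
proof -
  let ?N = "mat r r (\<lambda>(i,j). M i j)"
  have "Determinant.det ?N = 0" by (rule alt_det[OF assms])
  then obtain v where v: "v \<in> carrier_vec r" "v \<noteq> 0\<^sub>v r" "?N *\<^sub>v v = 0\<^sub>v r"
    using det_0_iff_vec_prod_zero[of ?N r] by auto
  have "\<exists>j<r. vec_index v j \<noteq> 0"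
    using v(1,2) by (metis eq_vecI carrier_vecD index_zero_vec(1,2))
  moreover have "(\<Sum>j<r. M i j * vec_index v j) = 0" if i: "i < r" for i
  proof -
    have "vec_index (?N *\<^sub>v v) i = 0" using v(3) i by simp
    then show ?thesis using i v(1)
      by (simp add: scalar_prod_def atLeast0LessThan)
  qed
  ultimately show ?thesis by blast
qed

abbreviation M1 :: "'a::zero_neq_one ^'n^'n" where "M1 \<equiv> Finite_Cartesian_Product.mat 1"

lemma inv_props:
  fixes A :: "'a::semiring_1 ^'n^'n"
  assumes "invertible A"
  shows "A ** matrix_inv A = M1 \<and> matrix_inv A ** A = M1"
  using assms unfolding invertible_def matrix_inv_def by (rule someI_ex)

lemma sym_inv:
  fixes A :: "'a::comm_semiring_1 ^'n^'n"
  assumes "transpose A = A" "invertible A"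
  shows "transpose (matrix_inv A) = matrix_inv A"
proof -
  let ?I = "matrix_inv A"
  have h: "A ** ?I = M1" "?I ** A = M1" using inv_props[OF assms(2)] by auto
  have "transpose ?I ** A = transpose (transpose A ** ?I)"
    by (simp add: matrix_transpose_mul)
  also have "\<dots> = M1" using h assms(1) by simp
  finally have t: "transpose ?I ** A = M1" .
  have "transpose ?I = transpose ?I ** (A ** ?I)" using h by simp
  also have "\<dots> = (transpose ?I ** A) ** ?I" by (simp add: matrix_mul_assoc)
  also have "\<dots> = ?I" using t by simp
  finally show ?thesis .
qed

lemma sp_sym:
  fixes B :: "'a::comm_semiring_1 ^'n^'n"
  assumes "transpose B = B"
  shows "scalar_product u (B *v w) = scalar_product w (B *v u)"
proof -
  have s: "vec_nth (vec_nth B i) j = vec_nth (vec_nth B j) i" for i j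
    using arg_cong[OF assms, of "\<lambda>X. vec_nth (vec_nth X j) i"] by (simp add: transpose_def)
  have "scalar_product u (B *v w) = (\<Sum>i\<in>UNIV. \<Sum>j\<in>UNIV. vec_nth u i * vec_nth (vec_nth B i) j * vec_nth w j)"
    by (simp add: scalar_product_def matrix_vector_mult_def sum_distrib_left mult.assoc)
  also have "\<dots> = (\<Sum>j\<in>UNIV. \<Sum>i\<in>UNIV. vec_nth u i * vec_nth (vec_nth B i) j * vec_nth w j)"
    by (rule sum.swap)
  also have "\<dots> = scalar_product w (B *v u)"
    by (simp add: scalar_product_def matrix_vector_mult_def sum_distrib_left s mult_ac)
  finally show ?thesis .
qed

lemma sp_sum: "scalar_product u (sum f S) = (\<Sum>j\<in>S. scalar_product u (f j))"
  by (simp add: scalar_product_def sum_distrib_left sum.swap[of _ S])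

lemma sp_scale: "scalar_product u (a *s w) = (a::'a::comm_semiring_1) * scalar_product u w"
  unfolding scalar_product_def sum_distrib_left by (simp add: mult.left_commute)

lemma delta_sum:
  fixes c :: "nat \<Rightarrow> 'a::comm_semiring_1"
  assumes "i < r"
  shows "(\<Sum>j<r. (if i = j then 1 else 0) * c j) = c i"
proof -
  have "(\<Sum>j<r. (if i = j then 1 else 0) * c j) = (\<Sum>j<r. if i = j then c j else 0)"
    by (rule sum.cong) auto
  also have "\<dots> = c i" using assms by (simp add: sum.delta')
  finally show ?thesis .
qed

lemma sum_comm_mult:
  fixes f g :: "'b \<Rightarrow> 'a::comm_semiring_1"
  shows "(\<Sum>j\<in>S. f j * g j) = (\<Sum>j\<in>S. g j * f j)"
  by (simp add: mult.commute)

lemma outer_mv_gen: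
  fixes x v :: "'a::comm_semiring_1 ^'n"
  shows "(\<chi> i j. vec_nth x i * vec_nth x j) *v v = scalar_product x v *s x"
  by (simp add: Finite_Cartesian_Product.vec_eq_iff matrix_vector_mult_def scalar_product_def
      sum_distrib_left mult_ac)

lemma bit_sum0: "(a::bit) + b = 0 \<Longrightarrow> b = a"
  by (cases a; cases b) simp_all

lemma sp_zero: "scalar_product u 0 = 0"
  by (simp add: scalar_product_def)

lemma mv_sum: "(B::'a::comm_semiring_1^'n^'m) *v sum f S = (\<Sum>j\<in>S. B *v f j)"
  by (simp add: Finite_Cartesian_Product.vec_eq_iff matrix_vector_mult_def sum_distrib_left sum.swap[of _ S])

lemma mv_scale: "(B::'a::comm_semiring_1^'n^'m) *v (a *s w) = a *s (B *v w)"
  by (simp add: Finite_Cartesian_Product.vec_eq_iff matrix_vector_mult_def sum_distrib_left mult_ac)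

lemma sum_mv: "(sum f S :: 'a::comm_semiring_1^'n^'m) *v v = (\<Sum>j\<in>S. f j *v v)"
  by (simp add: Finite_Cartesian_Product.vec_eq_iff matrix_vector_mult_def sum_distrib_right sum.swap[of _ S])

lemma outer_mv: "outer x *v v = scalar_product x v *s x"
  unfolding outer_def by (rule outer_mv_gen)

lemma bit_vec_add_self: "(w::bit^'n) + w = 0"
  by (simp add: Finite_Cartesian_Product.vec_eq_iff bit_add_self)

theorem lemma3p4:
  fixes A :: "bit ^ 'n ^ 'n" and x :: "nat \<Rightarrow> bit ^ 'n" and r :: nat
  assumes "odd r" and "1 \<le> r" and "r \<le> CARD('n)"
    and "A \<in> SGL"
    and "A + (\<Sum>i\<in>{1..r}. outer (x i)) \<in> SGL"
  shows "\<exists>i\<in>{1..r}. scalar_product (x i) (matrix_inv A *v x i) = 0"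
proof (rule ccontr)
  assume "\<not> ?thesis"
  then have one: "\<forall>i\<in>{1..r}. scalar_product (x i) (matrix_inv A *v x i) = 1" by simp
  let ?Ai = "matrix_inv A"
  define B where "B = A + (\<Sum>i\<in>{1..r}. outer (x i))"
  have At: "transpose A = A" and Ainv: "invertible A" using assms(4) by (auto simp: SGL_def)
  have Binv: "invertible B" using assms(5) by (auto simp: SGL_def B_def)
  have Ait: "transpose ?Ai = ?Ai" by (rule sym_inv[OF At Ainv])
  define M where "M i j = (if i = j then 1 else 0) + scalar_product (x (Suc i)) (?Ai *v x (Suc j))" for i j
  have Msym: "\<forall>i<r. \<forall>j<r. M i j = M j i"
    unfolding M_def using sp_sym[OF Ait] by auto
  have Mdiag: "\<forall>i<r. M i i = 0"
  proof (intro allI impI)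
    fix i assume "i < r"
    then have "scalar_product (x (Suc i)) (?Ai *v x (Suc i)) = 1" using one by auto
    then show "M i i = 0" unfolding M_def by (simp add: bit_add_self)
  qed
  obtain c where c: "\<exists>j<r. c j \<noteq> 0" "\<forall>i<r. (\<Sum>j<r. M i j * c j) = 0"
    using alt_kernel[OF assms(1) Msym Mdiag] by blast
  define w where "w = (\<Sum>j<r. c j *s x (Suc j))"
  define v where "v = ?Ai *v w"
  have key: "scalar_product (x (Suc i)) v = c i" if i: "i < r" for i
  proof -
    let ?S = "\<lambda>j. scalar_product (x (Suc i)) (?Ai *v x (Suc j))"
    have e1: "scalar_product (x (Suc i)) v = (\<Sum>j<r. c j * ?S j)"
      unfolding v_def w_def mv_sum mv_scale sp_sum sp_scale by (rule refl)
    have "0 = (\<Sum>j<r. M i j * c j)" using c(2) i by simp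
    also have "\<dots> = (\<Sum>j<r. (if i = j then 1 else 0) * c j) + (\<Sum>j<r. ?S j * c j)"
      unfolding M_def by (simp only: distrib_right sum.distrib)
    also have "\<dots> = c i + scalar_product (x (Suc i)) v"
      unfolding delta_sum[OF i] e1 sum_comm_mult[of ?S c] by (rule refl)
    finally have "c i + scalar_product (x (Suc i)) v = 0" by (rule sym)
    then show ?thesis by (rule bit_sum0)
  qed
  have Av: "A *v v = w"
    using inv_props[OF Ainv] unfolding v_def by (simp add: matrix_vector_mul_assoc)
  have "(\<Sum>i\<in>{1..r}. outer (x i)) *v v = (\<Sum>i\<in>{1..r}. scalar_product (x i) v *s x i)"
    by (simp add: sum_mv outer_mv)
  also have "\<dots> = (\<Sum>i<r. scalar_product (x (Suc i)) v *s x (Suc i))"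
    using sum.atLeast1_atMost_eq[of "\<lambda>i. scalar_product (x i) v *s x i" r] by simp
  also have "\<dots> = w" unfolding w_def using key by (intro sum.cong) auto
  finally have "B *v v = w + w"
    unfolding B_def by (simp add: matrix_vector_mult_add_rdistrib Av)
  then have Bv: "B *v v = 0" by (simp add: bit_vec_add_self)
  have "v = (matrix_inv B ** B) *v v" using inv_props[OF Binv] by simp
  also have "\<dots> = 0" by (simp add: matrix_vector_mul_assoc[symmetric] Bv)
  finally have "v = 0" .
  then have "\<forall>i<r. c i = 0" using key sp_zero by metis
  then show False using c(1) by blast
qed

end
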